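(* For any deterministic eviction heuristic $h$ and any $N$ and memory budget $B \le N$, there exists an $N$-node network (computation graph) on which DTR using heuristic $h$ with budget $B$ requires $\Omega(N/B)$ times more tensor computations than an optimal static checkpointing algorithm with the same budget.
   Context: A network is a directed acyclic computation graph whose nodes are tensors; each tensor is either a constant or produced by a pure operator applied to its parent tensors. Every tensor occupies one unit of memory and every operator application costs one unit (one tensor computation). DTR (Dynamic Tensor Rematerialization) with memory budget $B$ is an online algorithm: the network's operations are presented one at a time in a given order, and DTR must perform each one when presented, without knowledge of future operations. To perform an operation, its inputs must be resident; evicted inputs are rematerialized by recursively re-executing their producing operations. When memory is full, DTR evicts the resident (evictable) tensor chosen by the heuristic; a deterministic heuristic's choice depends only on the portion of the graph revealed so far and the execution history. Tensors with no producing operation (e.g. the input) can never be evicted. A static checkpointing algorithm sees the whole graph in advance and may compute the tensors in any order consistent with dependencies, choosing which tensors to keep or recompute, subject to the same memory budget $B$; both must compute every tensor of the network. The cost of an algorithm is its total number of tensor computations, including rematerializations. *)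

theory Defs
  imports Main "HOL.Real"
begin

text \<open>Nodes are 0 ..< net_size G, presented to DTR in this (topological)
  order.\<close>

record network =
  net_size :: nat
  parents :: "nat \<Rightarrow> nat list"
  is_const :: "nat \<Rightarrow> bool"

definition wf_network :: "network \<Rightarrow> bool" where
  "wf_network G \<longleftrightarrow>
     (\<forall>i < net_size G. distinct (parents G i) \<and> (\<forall>p \<in> set (parents G i). p < i)
        \<and> (is_const G i \<longleftrightarrow> parents G i = []))"

datatype event = Compute nat | Evict nat

definition ncomputes :: "event list \<Rightarrow> nat" where
  "ncomputes H = length (filter (\<lambda>e. case e of Compute _ \<Rightarrow> True | Evict _ \<Rightarrow> False) H)"

text \<open>The portion of the graph revealed when operation n is presented.\<close>
definition revealed :: "network \<Rightarrow> nat \<Rightarrow> (nat list \<times> bool) list" where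
  "revealed G n = map (\<lambda>j. (parents G j, is_const G j)) [0..<Suc n]"

text \<open>A deterministic heuristic: its choice depends only on the revealed graph,
  the execution history, and the (history-determined) set of evictable candidates.\<close>
type_synonym heuristic = "(nat list \<times> bool) list \<Rightarrow> event list \<Rightarrow> nat set \<Rightarrow> nat"

definition valid_heuristic :: "heuristic \<Rightarrow> bool" where
  "valid_heuristic h \<longleftrightarrow> (\<forall>g H C. C \<noteq> {} \<longrightarrow> h g H C \<in> C)"

text \<open>Making room for one new tensor while operation n is being performed,
  with locked tensors L: evict heuristic choices until memory is not full.\<close>
inductive dtr_alloc :: "network \<Rightarrow> nat \<Rightarrow> heuristic \<Rightarrow> nat \<Rightarrow> nat set
    \<Rightarrow> nat set \<times> event list \<Rightarrow> nat set \<times> event list \<Rightarrow> bool"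
  for G B h where
  room: "card R < B \<Longrightarrow> dtr_alloc G B h n L (R, H) (R, H)"
| evict: "B \<le> card R \<Longrightarrow>
      e = h (revealed G n) H {x \<in> R. \<not> is_const G x \<and> x \<notin> L} \<Longrightarrow>
      e \<in> {x \<in> R. \<not> is_const G x \<and> x \<notin> L} \<Longrightarrow>
      dtr_alloc G B h n L (R - {e}, H @ [Evict e]) s' \<Longrightarrow>
      dtr_alloc G B h n L (R, H) s'"

inductive dtr_remat :: "network \<Rightarrow> nat \<Rightarrow> heuristic \<Rightarrow> nat \<Rightarrow> nat set
    \<Rightarrow> nat set \<times> event list \<Rightarrow> nat \<Rightarrow> nat set \<times> event list \<Rightarrow> bool"
  and dtr_remat_list :: "network \<Rightarrow> nat \<Rightarrow> heuristic \<Rightarrow> nat \<Rightarrow> nat set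
    \<Rightarrow> nat set \<times> event list \<Rightarrow> nat list \<Rightarrow> nat set \<times> event list \<Rightarrow> bool"
  for G B h where
  resident: "t \<in> R \<Longrightarrow> dtr_remat G B h n L (R, H) t (R, H)"
| compute: "t \<notin> R \<Longrightarrow> \<not> is_const G t \<Longrightarrow>
      dtr_remat_list G B h n (L \<union> set (parents G t)) (R, H) (parents G t) (R1, H1) \<Longrightarrow>
      dtr_alloc G B h n (L \<union> set (parents G t)) (R1, H1) (R2, H2) \<Longrightarrow>
      dtr_remat G B h n L (R, H) t (insert t R2, H2 @ [Compute t])"
| nil: "dtr_remat_list G B h n L s [] s"
| cons: "dtr_remat G B h n L s p s1 \<Longrightarrow> dtr_remat_list G B h n L s1 ps s2 \<Longrightarrow>
      dtr_remat_list G B h n L s (p # ps) s2"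

inductive dtr_step :: "network \<Rightarrow> nat \<Rightarrow> heuristic \<Rightarrow> nat
    \<Rightarrow> nat set \<times> event list \<Rightarrow> nat set \<times> event list \<Rightarrow> bool"
  for G B h where
  const: "is_const G n \<Longrightarrow> dtr_alloc G B h n {} (R, H) (R1, H1) \<Longrightarrow>
      dtr_step G B h n (R, H) (insert n R1, H1 @ [Compute n])"
| op: "\<not> is_const G n \<Longrightarrow> dtr_remat G B h n {} s n s' \<Longrightarrow> dtr_step G B h n s s'"

inductive dtr_upto :: "network \<Rightarrow> nat \<Rightarrow> heuristic \<Rightarrow> nat
    \<Rightarrow> nat set \<times> event list \<Rightarrow> bool"
  for G B h where
  start: "dtr_upto G B h 0 ({}, [])"
| next_op: "dtr_upto G B h n s \<Longrightarrow> dtr_step G B h n s s' \<Longrightarrow> dtr_upto G B h (Suc n) s'"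

definition dtr_cost :: "network \<Rightarrow> nat \<Rightarrow> heuristic \<Rightarrow> nat \<Rightarrow> bool" where
  "dtr_cost G B h k \<longleftrightarrow> (\<exists>R H. dtr_upto G B h (net_size G) (R, H) \<and> k = ncomputes H)"

fun static_ok :: "network \<Rightarrow> nat \<Rightarrow> nat set \<Rightarrow> event list \<Rightarrow> bool" where
  "static_ok G B R [] = True"
| "static_ok G B R (Compute i # s) =
     (i < net_size G \<and> i \<notin> R \<and> set (parents G i) \<subseteq> R \<and> card (insert i R) \<le> B
      \<and> static_ok G B (insert i R) s)"
| "static_ok G B R (Evict i # s) = (i \<in> R \<and> \<not> is_const G i \<and> static_ok G B (R - {i}) s)"

definition valid_static :: "network \<Rightarrow> nat \<Rightarrow> event list \<Rightarrow> bool" where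
  "valid_static G B s \<longleftrightarrow> static_ok G B {} s \<and> (\<forall>i < net_size G. Compute i \<in> set s)"

definition opt_static :: "network \<Rightarrow> nat \<Rightarrow> nat" where
  "opt_static G B = (LEAST c. \<exists>s. valid_static G B s \<and> c = ncomputes s)"

end

theory Submission
  imports Defs
begin

definition gr :: "nat \<Rightarrow> nat \<Rightarrow> network" where
  "gr N m = \<lparr>net_size = N,
     parents = (\<lambda>i. if i = 0 then [] else if i \<le> m then [0] else [i - m]),
     is_const = (\<lambda>i. i = 0)\<rparr>"

lemma gr_simps[simp]:
  "net_size (gr N m) = N"
  "is_const (gr N m) i = (i = 0)"
  by (simp_all add: gr_def)

lemma gr_parents: "parents (gr N m) i = (if i = 0 then [] else if i \<le> m then [0] else [i - m])"
  by (simp_all add: gr_def)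

definition pa :: "nat \<Rightarrow> nat \<Rightarrow> nat" where
  "pa m t = (if t \<le> m then 0 else t - m)"

lemma parents_pa: "t \<noteq> 0 \<Longrightarrow> parents (gr N m) t = [pa m t]"
  by (simp add: pa_def gr_parents)

definition S :: "nat \<Rightarrow> nat \<Rightarrow> nat set" where
  "S m t = {x. 0 < x \<and> x \<le> t \<and> (x - 1) mod m = (t - 1) mod m}"

lemma S_0[simp]: "S m 0 = {}" by (auto simp: S_def)

lemma S_pa: "0 < t \<Longrightarrow> S m (pa m t) \<subseteq> S m t"
proof (cases "t \<le> m")
  case True then show ?thesis by (simp add: pa_def)
next
  case False
  assume "0 < t"
  have "(t - m - 1) mod m = (t - 1) mod m"
  proof -
    have "t - 1 = (t - m - 1) + m" using False by simp
    then show ?thesis by (metis mod_add_self2)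
  qed
  show ?thesis
  proof
    fix x assume "x \<in> S m (pa m t)"
    then have "0 < x" "x \<le> t - m" "(x - 1) mod m = (t - m - 1) mod m"
      using False by (simp_all add: S_def pa_def)
    then show "x \<in> S m t" using \<open>(t - m - 1) mod m = (t - 1) mod m\<close>
      unfolding S_def by simp
  qed
qed

lemma t_in_S: "0 < t \<Longrightarrow> t \<in> S m t" by (simp add: S_def)

lemma S_le: "x \<in> S m t \<Longrightarrow> 0 < x \<and> x \<le> t" by (simp add: S_def)

lemma ncomputes_app[simp]: "ncomputes (H @ [Evict e]) = ncomputes H"
  "ncomputes (H @ [Compute e]) = Suc (ncomputes H)"
  by (simp_all add: ncomputes_def)

lemma alloc_post:
  "dtr_alloc G B h n L s s' \<Longrightarrow> fst s' \<subseteq> fst s \<and> card (fst s') < B \<and>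
     (\<forall>x \<in> fst s - fst s'. \<not> is_const G x \<and> x \<notin> L) \<and> ncomputes (snd s') = ncomputes (snd s)"
proof (induction rule: dtr_alloc.induct)
  case (room R n L H)
  then show ?case by simp
next
  case (evict R e n H L s')
  have a: "fst s' \<subseteq> R - {e}" and b: "card (fst s') < B"
    and c: "\<forall>x \<in> (R - {e}) - fst s'. \<not> is_const G x \<and> x \<notin> L"
    and d: "ncomputes (snd s') = ncomputes (H @ [Evict e])"
    using evict.IH by simp_all
  have e: "\<not> is_const G e \<and> e \<notin> L" using evict.hyps(3) by simp
  have "\<forall>x \<in> R - fst s'. \<not> is_const G x \<and> x \<notin> L"
  proof
    fix x assume "x \<in> R - fst s'"
    then show "\<not> is_const G x \<and> x \<notin> L" using c e by (cases "x = e") blast+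
  qed
  then show ?case using a b d by (simp add: subset_Diff_insert)
qed

lemma alloc_exists:
  assumes vh: "valid_heuristic h"
  shows "finite R \<Longrightarrow> card {x\<in>R. is_const G x \<or> x \<in> L} < B \<Longrightarrow> \<exists>s'. dtr_alloc G B h n L (R, H) s'"
proof (induction "card R" arbitrary: R H rule: less_induct)
  case less
  show ?case
  proof (cases "card R < B")
    case True then show ?thesis using dtr_alloc.room by blast
  next
    case False
    let ?C = "{x \<in> R. \<not> is_const G x \<and> x \<notin> L}"
    let ?K = "{x\<in>R. is_const G x \<or> x \<in> L}"
    have eq: "R = ?C \<union> ?K" by auto
    have "card R = card (?C \<union> ?K)" using eq by (rule arg_cong[where f=card])
    moreover have "card (?C \<union> ?K) \<le> card ?C + card ?K" by (rule card_Un_le)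
    ultimately have "card R \<le> card ?C + card ?K" by linarith
    then have "card ?C > 0" using False less.prems by linarith
    then have "?C \<noteq> {}" by (intro notI) simp
    define e where "e = h (revealed G n) H ?C"
    have e: "e \<in> ?C" unfolding e_def
      by (rule vh[unfolded valid_heuristic_def, rule_format, OF \<open>?C \<noteq> {}\<close>])
    have c1: "card (R - {e}) < card R" using e less.prems(1) by (intro card_Diff1_less) auto
    have "{x\<in>R - {e}. is_const G x \<or> x \<in> L} \<subseteq> ?K" by auto
    moreover have "finite ?K" using less.prems(1) by simp
    ultimately have "card {x\<in>R - {e}. is_const G x \<or> x \<in> L} \<le> card ?K"
      by (rule card_mono[rotated])
    then have "card {x\<in>R - {e}. is_const G x \<or> x \<in> L} < B"
      using less.prems(2) by linarith
    then obtain s' where "dtr_alloc G B h n L (R - {e}, H @ [Evict e]) s'"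
      using less.hyps[OF c1] less.prems(1) by blast
    moreover have "B \<le> card R" using False by simp
    ultimately have "dtr_alloc G B h n L (R, H) s'"
      using e e_def by (intro dtr_alloc.evict[of B R e h G n H L s']) simp_all
    then show ?thesis by blast
  qed
qed

inductive_cases rl_cons: "dtr_remat_list G B h n L s (p # ps) s'"
inductive_cases rl_nil: "dtr_remat_list G B h n L s [] s'"

lemma list1:
  assumes "dtr_remat_list G B h n L s [p] s'" shows "dtr_remat G B h n L s p s'"
proof -
  from assms obtain s1 where a: "dtr_remat G B h n L s p s1" and b: "dtr_remat_list G B h n L s1 [] s'"
    by (rule rl_cons)
  from b have "s' = s1" by (rule rl_nil)
  then show ?thesis using a by simp
qed

lemma remat_post:
  assumes m: "0 < m"
  shows "dtr_remat (gr N m) B h n L (R,H) t (R',H') \<Longrightarrow> finite R \<Longrightarrow> 0 \<in> R \<Longrightarrow> card R \<le> B \<Longrightarrow>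
   t \<in> R' \<and> finite R' \<and> 0 \<in> R' \<and> card R' \<le> B \<and> R' \<subseteq> R \<union> S m t \<and> ncomputes H \<le> ncomputes H' \<and>
   (t \<notin> R \<longrightarrow> Suc (ncomputes H) \<le> ncomputes H') \<and>
   (0 < t \<longrightarrow> R \<inter> S m t = {} \<longrightarrow> ncomputes H + ((t-1) div m + 1) \<le> ncomputes H')"
proof (induction t arbitrary: L R H R' H' rule: less_induct)
  case (less t)
  from less.prems(1) show ?case
  proof (cases rule: dtr_remat.cases)
    case resident
    then show ?thesis using less.prems t_in_S[of t m] by auto
  next
    case (compute R1 H1 R2 H2)
    note c = this
    have t0: "t \<noteq> 0" using c by simp
    define p where "p = pa m t"
    have pl: "p < t" using t0 m by (simp add: p_def pa_def)
    have par: "parents (gr N m) t = [p]" unfolding p_def by (rule parents_pa[OF t0])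
    have rl: "dtr_remat_list (gr N m) B h n (L \<union> {p}) (R, H) [p] (R1, H1)"
      using c unfolding par by simp
    then have r1: "dtr_remat (gr N m) B h n (L \<union> {p}) (R, H) p (R1, H1)"
      by (rule list1)
    have IH: "p \<in> R1 \<and> finite R1 \<and> 0 \<in> R1 \<and> card R1 \<le> B \<and> R1 \<subseteq> R \<union> S m p \<and> ncomputes H \<le> ncomputes H1 \<and>
      (0 < p \<longrightarrow> R \<inter> S m p = {} \<longrightarrow> ncomputes H + ((p-1) div m + 1) \<le> ncomputes H1)"
      using less.IH[OF pl r1 less.prems(2-4)] by blast
    have c5: "dtr_alloc (gr N m) B h n (L \<union> {p}) (R1,H1) (R2,H2)" using c unfolding par by simp
    have al: "R2 \<subseteq> R1 \<and> card R2 < B \<and> (\<forall>x \<in> R1 - R2. \<not> is_const (gr N m) x \<and> x \<notin> L \<union> {p})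
       \<and> ncomputes H2 = ncomputes H1"
      using alloc_post[OF c5] by simp
    have "0 \<in> R2" using al IH by auto
    moreover have "finite R2" using al IH by (meson finite_subset)
    moreover have "card (insert t R2) \<le> B"
    proof -
      have "card (insert t R2) \<le> Suc (card R2)" using \<open>finite R2\<close> by (simp add: card_insert_if)
      then show ?thesis using al by linarith
    qed
    moreover have "insert t R2 \<subseteq> R \<union> S m t"
      using al IH S_pa[of t m] t_in_S[of t m] t0 unfolding p_def by auto
    moreover have "Suc (ncomputes H) \<le> ncomputes H'" using c al IH by simp
    moreover have "0 < t \<longrightarrow> R \<inter> S m t = {} \<longrightarrow> ncomputes H + ((t-1) div m + 1) \<le> ncomputes H'"
    proof (intro impI)
      assume "R \<inter> S m t = {}"
      show "ncomputes H + ((t-1) div m + 1) \<le> ncomputes H'"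
      proof (cases "t \<le> m")
        case True
        then have "(t-1) div m = 0" using m t0 by simp
        then show ?thesis using c al IH by simp
      next
        case False
        then have pp: "p = t - m" "0 < p" by (simp_all add: p_def pa_def)
        have "R \<inter> S m p = {}" using \<open>R \<inter> S m t = {}\<close> S_pa[of t m] t0 unfolding p_def by auto
        then have "ncomputes H + ((p-1) div m + 1) \<le> ncomputes H1" using IH pp by blast
        moreover have "(p-1) div m + 1 = (t-1) div m"
        proof -
          have "t - 1 = (p - 1) + 1 * m" using pp False by simp
          then have "(t-1) div m = ((p - 1) + 1 * m) div m" by (rule arg_cong[where f="\<lambda>x. x div m"])
          also have "\<dots> = (p-1) div m + 1" using m by (subst div_mult_self1) auto
          finally show ?thesis by simp
        qed
        ultimately show ?thesis using c al by simp
      qed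
    qed
    ultimately show ?thesis using c al IH by auto
  qed
qed

lemma remat_exists:
  assumes vh: "valid_heuristic h" and B3: "3 \<le> B" and m: "0 < m"
  shows "finite R \<Longrightarrow> 0 \<in> R \<Longrightarrow> card R \<le> B \<Longrightarrow> (t \<notin> R \<longrightarrow> L \<inter> R = {} \<and> (\<forall>x\<in>L. t \<le> x))
    \<Longrightarrow> \<exists>s'. dtr_remat (gr N m) B h n L (R,H) t s'"
proof (induction t arbitrary: L R H rule: less_induct)
  case (less t)
  show ?case
  proof (cases "t \<in> R")
    case True then show ?thesis using dtr_remat_dtr_remat_list.resident by blast
  next
    case False
    have t0: "t \<noteq> 0" using False less.prems(2) by (cases "t = 0") simp_all
    define p where "p = pa m t"
    have pl: "p < t" using t0 m by (simp add: p_def pa_def)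
    have par: "parents (gr N m) t = [p]" unfolding p_def by (rule parents_pa[OF t0])
    have LR: "L \<inter> R = {}" and Lt: "\<forall>x\<in>L. t \<le> x" using less.prems(4) False by simp_all
    have pre: "p \<notin> R \<longrightarrow> (L \<union> {p}) \<inter> R = {} \<and> (\<forall>x\<in>L \<union> {p}. p \<le> x)"
      using LR Lt pl by auto
    obtain s1 where r1s: "dtr_remat (gr N m) B h n (L \<union> {p}) (R,H) p s1"
      using less.IH[OF pl less.prems(1-3) pre] by blast
    obtain R1 H1 where s1: "s1 = (R1, H1)" by (cases s1)
    have r1: "dtr_remat (gr N m) B h n (L \<union> {p}) (R,H) p (R1,H1)" using r1s s1 by simp
    have post: "p \<in> R1" "finite R1" "R1 \<subseteq> R \<union> S m p"
      using remat_post[OF m r1 less.prems(1-3)] by simp_all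
    have K: "{x\<in>R1. is_const (gr N m) x \<or> x \<in> L \<union> {p}} \<subseteq> {0, p}"
    proof
      fix x assume x: "x \<in> {x\<in>R1. is_const (gr N m) x \<or> x \<in> L \<union> {p}}"
      show "x \<in> {0, p}"
      proof (cases "x \<in> L")
        case True
        then have "x \<notin> R" using LR by blast
        then have "x \<in> S m p" using x post(3) by blast
        then have "x \<le> p" using S_le by blast
        moreover have "t \<le> x" using Lt True by blast
        ultimately show ?thesis using pl by simp
      next
        case False then show ?thesis using x by simp
      qed
    qed
    have "card {x\<in>R1. is_const (gr N m) x \<or> x \<in> L \<union> {p}} \<le> card {0, p}"
      by (rule card_mono[OF _ K]) simp
    also have "\<dots> \<le> 2" by (simp add: card_insert_if)
    finally have "card {x\<in>R1. is_const (gr N m) x \<or> x \<in> L \<union> {p}} < B" using B3 by linarith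
    then obtain s2 where a2s: "dtr_alloc (gr N m) B h n (L \<union> {p}) (R1,H1) s2"
      using alloc_exists[OF vh post(2)] by blast
    obtain R2 H2 where s2: "s2 = (R2, H2)" by (cases s2)
    have a2: "dtr_alloc (gr N m) B h n (L \<union> set (parents (gr N m) t)) (R1,H1) (R2,H2)"
      using a2s s2 par by simp
    have rl: "dtr_remat_list (gr N m) B h n (L \<union> set (parents (gr N m) t)) (R,H) (parents (gr N m) t) (R1,H1)"
      unfolding par using r1 by (auto intro: dtr_remat_dtr_remat_list.cons dtr_remat_dtr_remat_list.nil)
    have "dtr_remat (gr N m) B h n L (R,H) t (insert t R2, H2 @ [Compute t])"
      by (rule dtr_remat_dtr_remat_list.compute[OF False _ rl a2]) (simp add: t0)
    then show ?thesis by blast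
  qed
qed

lemma alloc_empty: "dtr_alloc G B h n L ({}, []) (R1, H1) \<Longrightarrow> R1 = {} \<and> ncomputes H1 = 0"
  using alloc_post[of G B h n L "({}, [])" "(R1, H1)"] by (simp add: ncomputes_def)

lemma upto_basic:
  assumes m: "0 < m" and B3: "3 \<le> B"
  shows "dtr_upto (gr N m) B h n s \<Longrightarrow> (n = 0 \<longrightarrow> s = ({}, [])) \<and>
     (0 < n \<longrightarrow> finite (fst s) \<and> 0 \<in> fst s \<and> card (fst s) \<le> B \<and> fst s \<subseteq> {..<n} \<and> n \<le> ncomputes (snd s))"
proof (induction rule: dtr_upto.induct)
  case start
  then show ?case by simp
next
  case (next_op n s s')
  show ?case
  proof (cases "n = 0")
    case True
    then have s: "s = ({}, [])" using next_op.IH by simp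
    from next_op.hyps(2) show ?thesis
    proof (cases rule: dtr_step.cases)
      case (const R H R1 H1)
      then have "R1 = {} \<and> ncomputes H1 = 0" using alloc_empty s by simp
      then show ?thesis using const True B3 by simp
    next
      case op
      then show ?thesis using True by simp
    qed
  next
    case False
    obtain R H where s: "s = (R, H)" by (cases s)
    obtain R' H' where s': "s' = (R', H')" by (cases s')
    have inv: "finite R" "0 \<in> R" "card R \<le> B" "R \<subseteq> {..<n}" "n \<le> ncomputes H"
      using next_op.IH False s by simp_all
    from next_op.hyps(2) have r: "dtr_remat (gr N m) B h n {} (R, H) n (R', H')"
    proof (cases rule: dtr_step.cases)
      case const then show ?thesis using False by simp
    next
      case op then show ?thesis using s s' by simp
    qed
    have nR: "n \<notin> R" using inv(4) by blast
    have P: "n \<in> R' \<and> finite R' \<and> 0 \<in> R' \<and> card R' \<le> B \<and> R' \<subseteq> R \<union> S m n \<and> Suc (ncomputes H) \<le> ncomputes H'"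
      using remat_post[OF m r inv(1-3)] nR by blast
    have "R' \<subseteq> {..<Suc n}" using P inv(4) S_le[of _ m n] by fastforce
    then show ?thesis using P inv s' by simp
  qed
qed

lemma upto_exists:
  assumes vh: "valid_heuristic h" and B3: "3 \<le> B" and m: "0 < m"
  shows "\<exists>s. dtr_upto (gr N m) B h n s"
proof (induction n)
  case 0
  then show ?case using dtr_upto.start by blast
next
  case (Suc n)
  then obtain s where u: "dtr_upto (gr N m) B h n s" by blast
  note b = upto_basic[OF m B3 u]
  show ?case
  proof (cases "n = 0")
    case True
    then have s: "s = ({}, [])" using b by simp
    have "card {x\<in>{}. is_const (gr N m) x \<or> x \<in> {}} < B" using B3 by simp
    then obtain s1 where a: "dtr_alloc (gr N m) B h n {} ({}, []) s1"
      using alloc_exists[OF vh, of "{}" "gr N m" "{}" B n "[]"] by blast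
    obtain R1 H1 where s1: "s1 = (R1, H1)" by (cases s1)
    have "dtr_step (gr N m) B h n ({}, []) (insert n R1, H1 @ [Compute n])"
      by (rule dtr_step.const) (use True a s1 in simp_all)
    then show ?thesis using u s dtr_upto.next_op by blast
  next
    case False
    obtain R H where s: "s = (R, H)" by (cases s)
    have inv: "finite R" "0 \<in> R" "card R \<le> B" "R \<subseteq> {..<n}"
      using b False s by simp_all
    have nR: "n \<notin> R" using inv(4) by blast
    have "\<exists>s'. dtr_remat (gr N m) B h n {} (R, H) n s'"
      by (rule remat_exists[OF vh B3 m inv(1-3)]) simp
    then obtain s' where r: "dtr_remat (gr N m) B h n {} (R, H) n s'" by blast
    have "dtr_step (gr N m) B h n (R, H) s'"
      by (rule dtr_step.op) (use False r in simp_all)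
    then show ?thesis using u s dtr_upto.next_op by blast
  qed
qed

definition D :: "nat \<Rightarrow> nat \<Rightarrow> nat \<Rightarrow> nat set \<Rightarrow> nat set" where
  "D m r a R = {x. a \<le> x \<and> x \<le> r*m + m \<and> R \<inter> S m x = {}}"

lemma div_eq_round: "0 < m \<Longrightarrow> r*m \<le> a \<Longrightarrow> a < r*m + m \<Longrightarrow> a div m = (r::nat)"
  using div_nat_eqI[of m r a] by (simp add: mult.commute)

lemma same_round:
  assumes m: "0 < m" and r: "(n-1) div m = r" and n: "0 < n" "n < x" "x \<le> r*m + m"
  shows "S m n \<inter> S m x = {}"
proof (rule ccontr)
  assume "S m n \<inter> S m x \<noteq> {}"
  then obtain y where "y \<in> S m n" "y \<in> S m x" by blast
  then have md: "(n-1) mod m = (x-1) mod m" by (simp add: S_def)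
  have "r*m \<le> n - 1" using r div_mult_mod_eq[of "n-1" m] by (metis le_add1)
  then have "(x-1) div m = r" using n by (intro div_eq_round[OF m]) simp_all
  then have "x - 1 = n - 1" using md r div_mult_mod_eq[of "n-1" m] div_mult_mod_eq[of "x-1" m] by metis
  then show False using n by simp
qed

lemma finite_D: "finite (D m r a R)"
  by (rule finite_subset[of _ "{..r*m+m}"]) (auto simp: D_def)

lemma round_start:
  assumes m: "m = 2*B" and B: "1 \<le> B" and R: "finite R" "0 \<in> R" "card R \<le> B"
  shows "B + 1 \<le> card (D m q (q*m+1) R)"
proof -
  have m0: "0 < m" using m B by simp
  define Rd where "Rd = {q*m+1 .. q*m+m}"
  define A where "A = {x\<in>Rd. R \<inter> S m x \<noteq> {}}"
  define g where "g y = q*m + 1 + (y-1) mod m" for y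
  have DA: "D m q (q*m+1) R = Rd - A" by (auto simp: D_def Rd_def A_def)
  have "A \<subseteq> g ` (R - {0})"
  proof
    fix x assume "x \<in> A"
    then have x: "q*m+1 \<le> x" "x \<le> q*m+m" and "R \<inter> S m x \<noteq> {}" by (auto simp: A_def Rd_def)
    then obtain y where y: "y \<in> R" "y \<in> S m x" by blast
    then have y0: "y \<noteq> 0" and ym: "(y-1) mod m = (x-1) mod m" by (auto simp: S_def)
    have "(x-1) div m = q" using x by (intro div_eq_round[OF m0]) simp_all
    then have "x - 1 = q*m + (x-1) mod m" using div_mult_mod_eq[of "x-1" m] by simp
    then have "g y = x" using ym x unfolding g_def by simp
    then show "x \<in> g ` (R - {0})" using y y0 by blast
  qed
  then have "card A \<le> card (R - {0})" using R by (meson card_image_le card_mono finite_Diff finite_imageI le_trans)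
  also have "\<dots> = card R - 1" using R by simp
  finally have cA: "card A \<le> B - 1" using R by linarith
  have cRd: "card Rd = m" by (simp add: Rd_def)
  have "card (Rd - A) = card Rd - card A"
    by (rule card_Diff_subset) (auto simp: A_def Rd_def)
  then show ?thesis using DA cA cRd m B by simp
qed

lemma arith1: "(2::nat)*n + X \<le> 2*c + 2*a \<Longrightarrow> a \<le> b + r \<Longrightarrow> c + (r+1) \<le> c' \<Longrightarrow> 2*Suc n + X \<le> 2*c' + 2*b"
  by simp

lemma arith2: "(2::nat)*n + X \<le> 2*c + 2*a \<Longrightarrow> a \<le> b \<Longrightarrow> Suc c \<le> c' \<Longrightarrow> 2*Suc n + X \<le> 2*c' + 2*b"
  by simp

lemma arith3: "Z \<le> W \<Longrightarrow> Y = X + 2*Z \<Longrightarrow> (2::nat)*sn + X \<le> 2*c \<Longrightarrow> 2*sn + Y \<le> 2*c + 2*W"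
  by simp

lemma upto_lb:
  assumes m: "m = 2*B" and B3: "3 \<le> B"
  shows "dtr_upto (gr N m) B h n s \<Longrightarrow> 0 < n \<longrightarrow>
    2*n + (B+1)*((n-1) div m)*((n-1) div m + 1) \<le>
      2*ncomputes (snd s) + 2*(((n-1) div m)*card (D m ((n-1) div m) n (fst s)))"
proof (induction rule: dtr_upto.induct)
  case start
  then show ?case by simp
next
  case (next_op n s s')
  have m0: "0 < m" using m B3 by simp
  have u': "dtr_upto (gr N m) B h (Suc n) s'" using next_op.hyps by (rule dtr_upto.next_op)
  note b' = upto_basic[OF m0 B3 u']
  show ?case
  proof (cases "n = 0")
    case True
    then show ?thesis using b' by simp
  next
    case False
    note b = upto_basic[OF m0 B3 next_op.hyps(1)]
    obtain R H where s: "s = (R, H)" by (cases s)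
    obtain R' H' where s': "s' = (R', H')" by (cases s')
    have inv: "finite R" "0 \<in> R" "card R \<le> B" "R \<subseteq> {..<n}"
      using b False s by simp_all
    have inv': "finite R'" "0 \<in> R'" "card R' \<le> B"
      using b' s' by simp_all
    define r where "r = (n-1) div m"
    have IH: "2*n + (B+1)*r*(r + 1) \<le> 2*ncomputes H + 2*(r*card (D m r n R))"
      using next_op.IH False s unfolding r_def by simp
    from next_op.hyps(2) have rm: "dtr_remat (gr N m) B h n {} (R, H) n (R', H')"
    proof (cases rule: dtr_step.cases)
      case const then show ?thesis using False by simp
    next
      case op then show ?thesis using s s' by simp
    qed
    have nR: "n \<notin> R" using inv(4) by blast
    have P: "R' \<subseteq> R \<union> S m n" "Suc (ncomputes H) \<le> ncomputes H'"
      "R \<inter> S m n = {} \<longrightarrow> ncomputes H + (r + 1) \<le> ncomputes H'"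
      using remat_post[OF m0 rm inv(1-3)] nR False unfolding r_def by simp_all
    have dm: "n - 1 = r*m + (n-1) mod m" using div_mult_mod_eq[of "n-1" m] unfolding r_def by simp
    have "(n-1) mod m < m" using m0 by simp
    then have nle: "n \<le> r*m + m" using dm False by linarith
    have rle: "r*m \<le> n - 1" using dm by linarith
    have sub: "D m r n R - {n} \<subseteq> D m r (Suc n) R'"
    proof
      fix x assume x: "x \<in> D m r n R - {n}"
      then have x1: "n < x" "x \<le> r*m + m" "R \<inter> S m x = {}" by (auto simp: D_def)
      have "S m n \<inter> S m x = {}" using same_round[OF m0 r_def[symmetric]] x1 False by simp
      then have "R' \<inter> S m x = {}" using P(1) x1(3) by blast
      then show "x \<in> D m r (Suc n) R'" using x1 by (simp add: D_def)
    qed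
    define cD where "cD = card (D m r n R)"
    define cD' where "cD' = card (D m r (Suc n) R')"
    have A: "2*(Suc n) + (B+1)*r*(r + 1) \<le> 2*ncomputes H' + 2*(r*cD')"
    proof (cases "R \<inter> S m n = {}")
      case True
      then have "n \<in> D m r n R" using nle by (simp add: D_def)
      then have "card (D m r n R - {n}) = cD - 1" unfolding cD_def by (simp add: finite_D)
      moreover have "card (D m r n R - {n}) \<le> cD'" unfolding cD'_def
        by (rule card_mono[OF finite_D sub])
      ultimately have "cD \<le> cD' + 1" by linarith
      then have "r * cD \<le> r * cD' + r" using mult_le_mono2[of cD "cD' + 1" r] by simp
      then show ?thesis using arith1[OF IH _ P(3)[rule_format, OF True]] unfolding cD_def by blast
    next
      case False
      then have "n \<notin> D m r n R" by (simp add: D_def)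
      then have "D m r n R \<subseteq> D m r (Suc n) R'" using sub by blast
      then have "cD \<le> cD'" unfolding cD_def cD'_def by (rule card_mono[OF finite_D])
      then have "r * cD \<le> r * cD'" by simp
      then show ?thesis using arith2[OF IH _ P(2)] unfolding cD_def by blast
    qed
    show ?thesis
    proof (cases "n div m = r")
      case True
      then show ?thesis using A s' unfolding cD'_def by simp
    next
      case ne: False
      have nv: "n = r*m + m"
      proof (rule ccontr)
        assume "n \<noteq> r*m + m"
        then have "n < r*m + m" using nle by simp
        then have "n div m = r" using rle False by (intro div_eq_round[OF m0]) simp_all
        then show False using ne by simp
      qed
      have r1: "n div m = r + 1" using nv m0 by simp
      have "D m r (Suc n) R' = {}" using nv by (auto simp: D_def)
      then have A': "2*(Suc n) + (B+1)*r*(r + 1) \<le> 2*ncomputes H'" using A unfolding cD'_def by simp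
      have "B + 1 \<le> card (D m (r+1) ((r+1)*m+1) R')"
        by (rule round_start[OF m _ inv']) (use B3 in simp)
      moreover have "Suc n = (r+1)*m+1" using nv by simp
      ultimately have cn: "B + 1 \<le> card (D m (r+1) (Suc n) R')" by simp
      have "(r+1)*(B+1) \<le> (r+1)*card (D m (r+1) (Suc n) R')" by (rule mult_le_mono2[OF cn])
      moreover have "(B+1)*(r+1)*(r+1+1) = (B+1)*r*(r+1) + 2*((r+1)*(B+1))" by (simp add: algebra_simps)
      ultimately have "2*(Suc n) + (B+1)*(r+1)*(r+1+1) \<le> 2*ncomputes H' + 2*((r+1)*card (D m (r+1) (Suc n) R'))"
        using A' by (rule arith3)
      then show ?thesis using r1 s' by simp
    qed
  qed
qed

function chn :: "nat \<Rightarrow> nat \<Rightarrow> nat \<Rightarrow> nat list" where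
  "chn N m j = (if j < N \<and> 0 < m then j # chn N m (j + m) else [])"
  by auto
termination by (relation "measure (\<lambda>(N,m,j). N - j)") auto

declare chn.simps[simp del]

lemma chn_cons: "j < N \<Longrightarrow> 0 < m \<Longrightarrow> chn N m j = j # chn N m (j + m)"
  by (subst chn.simps) simp

lemma chn_nil: "\<not> j < N \<Longrightarrow> chn N m j = []"
  by (subst chn.simps) simp

fun cs :: "nat \<Rightarrow> nat list \<Rightarrow> event list" where
  "cs x [] = [Evict x]"
| "cs x (y # ys) = Compute y # Evict x # cs y ys"

definition chs :: "nat \<Rightarrow> nat \<Rightarrow> nat \<Rightarrow> event list" where
  "chs N m j = (case chn N m j of [] \<Rightarrow> [] | x # xs \<Rightarrow> Compute x # cs x xs)"

definition sched :: "nat \<Rightarrow> nat \<Rightarrow> event list" where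
  "sched N m = Compute 0 # concat (map (chs N m) [1..<Suc m])"

lemma chn_set: "0 < m \<Longrightarrow> x \<in> set (chn N m j) \<Longrightarrow> j \<le> x \<and> x < N \<and> (\<exists>q. x = j + q*m)"
proof (induction N m j rule: chn.induct)
  case (1 N m j)
  show ?case
  proof (cases "j < N")
    case True
    then have "x = j \<or> x \<in> set (chn N m (j + m))" using 1(3) chn_cons[OF True 1(2)] by simp
    then show ?thesis
    proof
      assume "x = j" then show ?thesis using True by (intro conjI exI[of _ 0]) simp_all
    next
      assume "x \<in> set (chn N m (j + m))"
      then have "j + m \<le> x \<and> x < N \<and> (\<exists>q. x = j + m + q*m)" using 1(1) True 1(2) by blast
      then obtain q where "j + m \<le> x" "x < N" "x = j + m + q*m" by blast
      then show ?thesis by (intro conjI exI[of _ "Suc q"]) simp_all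
    qed
  next
    case False then show ?thesis using 1(3) chn_nil by simp
  qed
qed

lemma chn_mem: "0 < m \<Longrightarrow> j + q*m < N \<Longrightarrow> j + q*m \<in> set (chn N m j)"
proof (induction q arbitrary: j)
  case 0 then show ?case by (simp add: chn_cons)
next
  case (Suc q)
  have "(j + m) + q*m < N" using Suc.prems by (simp add: algebra_simps)
  then have "(j + m) + q*m \<in> set (chn N m (j + m))" using Suc.IH Suc.prems(1) by blast
  moreover have "j < N" using Suc.prems by simp
  ultimately show ?case using chn_cons[of j N m] Suc.prems(1) by (simp add: algebra_simps)
qed

lemma chn_distinct: "0 < m \<Longrightarrow> distinct (chn N m j)"
proof (induction N m j rule: chn.induct)
  case (1 N m j)
  show ?case
  proof (cases "j < N")
    case True
    have "j \<notin> set (chn N m (j + m))" using chn_set[OF 1(2), of j N "j + m"] 1(2) by auto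
    then show ?thesis using chn_cons[OF True 1(2)] 1(1)[OF _ 1(2)] True 1(2) by simp
  next
    case False then show ?thesis using chn_nil by simp
  qed
qed

lemma cs_ok:
  assumes m: "0 < m" and B3: "3 \<le> B" and rest: "static_ok (gr N m) B {0} rest"
  shows "\<forall>x. 0 < x \<longrightarrow> x < N \<longrightarrow> ys = chn N m (x + m) \<longrightarrow> static_ok (gr N m) B (insert x {0}) (cs x ys @ rest)"
proof (induction ys)
  case Nil
  show ?case
  proof (intro allI impI)
    fix x :: nat assume x: "0 < x"
    have "insert x {0} - {x} = {0}" using x by auto
    then show "static_ok (gr N m) B (insert x {0}) (cs x [] @ rest)" using x rest by simp
  qed
next
  case (Cons y ys)
  show ?case
  proof (intro allI impI)
    fix x :: nat assume x: "0 < x" "x < N" and ch: "y # ys = chn N m (x + m)"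
    have xm: "x + m < N" using ch chn_nil[of "x+m" N m] by (cases "x + m < N") auto
    then have y: "y = x + m" "ys = chn N m (y + m)" using ch chn_cons[OF xm m] by simp_all
    have IH: "static_ok (gr N m) B (insert y {0}) (cs y ys @ rest)"
      using Cons.IH xm y x by simp
    have e1: "insert y (insert x {0}) - {x} = insert y {0}" using x y m by auto
    have par: "parents (gr N m) y = [x]" using y x by (simp add: gr_parents)
    have "card (insert y (insert x {0})) \<le> 3" by (simp add: card_insert_if)
    then have c3: "card (insert y (insert x {0})) \<le> B" using B3 by linarith
    show "static_ok (gr N m) B (insert x {0}) (cs x (y # ys) @ rest)"
      using IH e1 par c3 x y xm m by simp
  qed
qed

lemma chs_ok:
  assumes m: "0 < m" and B3: "3 \<le> B" and rest: "static_ok (gr N m) B {0} rest"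
    and j: "1 \<le> j" "j \<le> m"
  shows "static_ok (gr N m) B {0} (chs N m j @ rest)"
proof (cases "j < N")
  case True
  have c: "chs N m j = Compute j # cs j (chn N m (j + m))" unfolding chs_def using chn_cons[OF True m] by simp
  have "static_ok (gr N m) B (insert j {0}) (cs j (chn N m (j + m)) @ rest)"
    using cs_ok[OF m B3 rest] True j by simp
  moreover have "parents (gr N m) j = [0]" using j by (simp add: gr_parents)
  moreover have "card (insert j {0}) \<le> B" using B3 by (simp add: card_insert_if)
  ultimately show ?thesis using c True j by simp
next
  case False
  then show ?thesis unfolding chs_def using chn_nil[OF False] rest by simp
qed

lemma concat_ok:
  assumes m: "0 < m" and B3: "3 \<le> B"
  shows "\<forall>j\<in>set js. 1 \<le> j \<and> j \<le> m \<Longrightarrow> static_ok (gr N m) B {0} (concat (map (chs N m) js))"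
proof (induction js)
  case Nil then show ?case by simp
next
  case (Cons j js)
  then have "static_ok (gr N m) B {0} (concat (map (chs N m) js))" by simp
  then have "static_ok (gr N m) B {0} (chs N m j @ concat (map (chs N m) js))"
    using chs_ok[OF m B3] Cons.prems by simp
  then show ?case by simp
qed

lemma sched_ok:
  assumes m: "0 < m" and B3: "3 \<le> B" and N: "0 < N"
  shows "static_ok (gr N m) B {} (sched N m)"
proof -
  have "static_ok (gr N m) B {0} (concat (map (chs N m) [1..<Suc m]))"
    by (rule concat_ok[OF m B3]) (simp only: set_upt, auto)
  then show ?thesis unfolding sched_def using N B3 by (simp add: gr_parents)
qed

lemma cs_comp: "Compute z \<in> set (cs x ys) \<longleftrightarrow> z \<in> set ys"
  by (induction ys arbitrary: x) auto

lemma chs_comp: "Compute z \<in> set (chs N m j) \<longleftrightarrow> z \<in> set (chn N m j)"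
  unfolding chs_def by (cases "chn N m j") (auto simp: cs_comp)

lemma sched_all:
  assumes m: "0 < m"
  shows "i < N \<Longrightarrow> Compute i \<in> set (sched N m)"
proof (cases "i = 0")
  case True then show ?thesis by (simp add: sched_def)
next
  case False
  assume i: "i < N"
  define j where "j = (i - 1) mod m + 1"
  have j: "1 \<le> j" "j \<le> m" using m unfolding j_def by (simp_all add: Suc_leI)
  have "i = j + ((i-1) div m) * m" using div_mult_mod_eq[of "i-1" m] False unfolding j_def by simp
  then have "i \<in> set (chn N m j)" using chn_mem[OF m, of j "(i-1) div m" N] i by simp
  then have "Compute i \<in> set (chs N m j)" by (simp add: chs_comp)
  moreover have "j \<in> set [1..<Suc m]" using j by (simp only: set_upt) auto
  ultimately show ?thesis unfolding sched_def by (auto simp del: upt_Suc)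
qed

lemma nc_append: "ncomputes (xs @ ys) = ncomputes xs + ncomputes ys"
  by (simp add: ncomputes_def)

lemma nc_cons[simp]: "ncomputes (Compute x # xs) = Suc (ncomputes xs)" "ncomputes (Evict x # xs) = ncomputes xs"
  "ncomputes [] = 0"
  by (simp_all add: ncomputes_def)

lemma nc_cs: "ncomputes (cs x ys) = length ys"
  by (induction ys arbitrary: x) simp_all

lemma nc_chs: "ncomputes (chs N m j) = length (chn N m j)"
  unfolding chs_def by (cases "chn N m j") (simp_all add: nc_cs)

lemma nc_concat: "ncomputes (concat xss) = sum_list (map ncomputes xss)"
  by (induction xss) (simp_all add: nc_append)

lemma chn_char:
  assumes m: "0 < m" and j: "1 \<le> j" "j \<le> m" and x: "x \<in> set (chn N m j)"
  shows "0 < x \<and> x < N \<and> (x - 1) mod m = j - 1"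
proof -
  obtain q where q: "j \<le> x" "x < N" "x = j + q*m" using chn_set[OF m x] by blast
  have "x - 1 = (j - 1) + q*m" using q j by simp
  then have "(x - 1) mod m = (j - 1) mod m" by simp
  also have "\<dots> = j - 1" using j by simp
  finally show ?thesis using q j by simp
qed

lemma sched_nc:
  assumes m: "0 < m" and N: "0 < N"
  shows "ncomputes (sched N m) \<le> N"
proof -
  let ?I = "{1..<Suc m}"
  let ?A = "\<lambda>j. set (chn N m j)"
  have "ncomputes (sched N m) = Suc (sum_list (map (\<lambda>j. length (chn N m j)) [1..<Suc m]))"
    unfolding sched_def by (simp add: nc_concat nc_chs o_def del: upt_Suc)
  also have "sum_list (map (\<lambda>j. length (chn N m j)) [1..<Suc m]) = (\<Sum>j\<in>?I. length (chn N m j))"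
    by (simp only: interv_sum_list_conv_sum_set_nat set_upt)
  also have "\<dots> = (\<Sum>j\<in>?I. card (?A j))"
    using chn_distinct[OF m] by (simp add: distinct_card)
  also have "\<dots> = card (\<Union> (?A ` ?I))"
  proof (rule card_UN_disjoint[symmetric])
    show "finite ?I" by simp
    show "\<forall>i\<in>?I. finite (?A i)" by simp
    show "\<forall>i\<in>?I. \<forall>j\<in>?I. i \<noteq> j \<longrightarrow> ?A i \<inter> ?A j = {}"
    proof (intro ballI impI)
      fix i j assume i: "i \<in> ?I" and j: "j \<in> ?I" and ij: "i \<noteq> j"
      show "?A i \<inter> ?A j = {}"
      proof (rule ccontr)
        assume "?A i \<inter> ?A j \<noteq> {}"
        then obtain x where "x \<in> ?A i" "x \<in> ?A j" by blast
        then have "(x - 1) mod m = i - 1" "(x - 1) mod m = j - 1"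
          using chn_char[OF m] i j by auto
        then show False using i j ij by auto
      qed
    qed
  qed
  also have "card (\<Union> (?A ` ?I)) \<le> card {1..<N}"
  proof (rule card_mono)
    show "finite {1..<N}" by simp
    show "\<Union> (?A ` ?I) \<subseteq> {1..<N}"
    proof
      fix x assume "x \<in> \<Union> (?A ` ?I)"
      then obtain j where "j \<in> ?I" "x \<in> ?A j" by blast
      then show "x \<in> {1..<N}" using chn_char[OF m, of j x N] by auto
    qed
  qed
  finally show ?thesis using N by simp
qed

lemma poly: "50 \<le> (r::nat) \<Longrightarrow> 4*((r+1)*(r+1)) + 200*r \<le> 50*(r*(r+1))"
proof -
  assume r: "50 \<le> r"
  have a: "50*r \<le> r*r" using r by simp
  have b: "4*((r+1)*(r+1)) + 200*r = 4*(r*r) + 208*r + 4" by (simp add: algebra_simps)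
  have c: "50*(r*(r+1)) = 50*(r*r) + 50*r" by (simp add: algebra_simps)
  show ?thesis unfolding b c using a r by linarith
qed

lemma core:
  fixes N k B r cD :: nat
  assumes Nk: "N \<le> k" and lb: "2*N + (B+1)*r*(r+1) \<le> 2*k + 2*(r*cD)" and cD: "cD \<le> 2*B"
    and Nr: "N \<le> 2*B*(r+1)"
  shows "N*N \<le> 100*B*k"
proof (cases "r \<le> 49")
  case True
  have "N*N \<le> N*(2*B*(r+1))" using Nr by simp
  also have "\<dots> \<le> N*(100*B)" using True by simp
  also have "\<dots> \<le> k*(100*B)" using Nk by simp
  finally show ?thesis by (simp add: algebra_simps)
next
  case False
  then have r: "50 \<le> r" by simp
  have a: "r*cD \<le> r*(2*B)" using cD by simp
  have e1: "(B+1)*r*(r+1) = B*(r*(r+1)) + r*(r+1)" by (simp add: algebra_simps)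
  have e2: "r*(2*B) = 2*(B*r)" by (simp add: algebra_simps)
  have h1: "B*(r*(r+1)) \<le> 2*k + 4*(B*r)" using lb a unfolding e1 e2 by linarith
  have "B*(4*((r+1)*(r+1)) + 200*r) \<le> B*(50*(r*(r+1)))" using poly[OF r] by simp
  also have "\<dots> = 50*(B*(r*(r+1)))" by (simp add: algebra_simps)
  also have "\<dots> \<le> 50*(2*k + 4*(B*r))" using h1 by (rule mult_le_mono2)
  finally have h2: "B*(4*((r+1)*(r+1))) + 200*(B*r) \<le> 100*k + 200*(B*r)" by (simp add: algebra_simps)
  then have h2: "B*(4*((r+1)*(r+1))) \<le> 100*k" by linarith
  have "N*N \<le> (2*B*(r+1))*(2*B*(r+1))" using Nr by (simp add: mult_le_mono)
  also have "\<dots> = B*(B*(4*((r+1)*(r+1))))" by (simp add: algebra_simps)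
  also have "\<dots> \<le> B*(100*k)" using h2 by simp
  finally show ?thesis by (simp add: algebra_simps)
qed

lemma main:
  assumes vh: "valid_heuristic h" and B3: "3 \<le> B" and BN: "B \<le> N"
  shows "\<exists>G. wf_network G \<and> net_size G = N
        \<and> (\<exists>s. valid_static G B s)
        \<and> (\<exists>k. dtr_cost G B h k)
        \<and> (\<forall>k. dtr_cost G B h k \<longrightarrow>
              real k \<ge> (1/100) * (real N / real B) * real (opt_static G B))"
proof -
  define m where "m = 2*B"
  have m0: "0 < m" using B3 by (simp add: m_def)
  have N0: "0 < N" using B3 BN by simp
  define G where "G = gr N m"
  have wf: "wf_network G" unfolding G_def wf_network_def using m0 by (auto simp: gr_parents)
  have vs: "valid_static G B (sched N m)"
    unfolding valid_static_def G_def using sched_ok[OF m0 B3 N0] sched_all[OF m0] by simp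
  have opt: "opt_static G B \<le> N"
  proof -
    have "opt_static G B \<le> ncomputes (sched N m)"
      unfolding opt_static_def using vs by (intro Least_le) blast
    then show ?thesis using sched_nc[OF m0 N0] by simp
  qed
  obtain s where u: "dtr_upto G B h N s" using upto_exists[OF vh B3 m0] unfolding G_def by blast
  have ex: "\<exists>k. dtr_cost G B h k"
  proof -
    obtain R H where "s = (R, H)" by (cases s)
    then have "dtr_upto G B h (net_size G) (R, H)" using u unfolding G_def by simp
    then show ?thesis unfolding dtr_cost_def by blast
  qed
  have lbk: "real k \<ge> (1/100) * (real N / real B) * real (opt_static G B)" if dc: "dtr_cost G B h k" for k
  proof -
    obtain R H where u: "dtr_upto G B h N (R, H)" and k: "k = ncomputes H"
      using dc unfolding dtr_cost_def G_def by auto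
    have Nk: "N \<le> k" using upto_basic[OF m0 B3 u[unfolded G_def]] N0 k by simp
    define r where "r = (N-1) div m"
    have lb: "2*N + (B+1)*r*(r+1) \<le> 2*k + 2*(r*card (D m r N R))"
      using upto_lb[OF m_def B3 u[unfolded G_def]] N0 k unfolding r_def by simp
    have dm: "N - 1 = r*m + (N-1) mod m" using div_mult_mod_eq[of "N-1" m] unfolding r_def by simp
    have "(N-1) mod m < m" using m0 by simp
    then have Nr': "N \<le> r*m + m" using dm N0 by linarith
    then have Nr: "N \<le> 2*B*(r+1)" unfolding m_def by (simp add: algebra_simps)
    have rN: "r*m + 1 \<le> N" using dm N0 by linarith
    have "D m r N R \<subseteq> {r*m+1 .. r*m+m}" using rN by (auto simp: D_def)
    then have "card (D m r N R) \<le> card {r*m+1 .. r*m+m}" by (rule card_mono[rotated]) simp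
    then have cD: "card (D m r N R) \<le> 2*B" unfolding m_def by simp
    have core: "N*N \<le> 100*B*k" by (rule core[OF Nk lb cD Nr])
    have Bp: "0 < real B" using B3 by simp
    have "(1/100) * (real N / real B) * real (opt_static G B) \<le> (1/100) * (real N / real B) * real N"
      using opt by (intro mult_left_mono) simp_all
    also have "\<dots> = real (N*N) / (100 * real B)" by simp
    also have "\<dots> \<le> real k"
    proof -
      have "real (N*N) \<le> 100 * real B * real k" using core by (metis of_nat_le_iff of_nat_mult of_nat_numeral)
      then show ?thesis using Bp by (simp add: divide_le_eq mult.commute mult.left_commute)
    qed
    finally show ?thesis .
  qed
  show ?thesis using wf vs ex lbk unfolding G_def by auto
qed

theorem theorem2:
  shows "\<exists>c::real > 0. \<exists>B0::nat. \<forall>(h::heuristic) (N::nat) (B::nat).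
     valid_heuristic h \<longrightarrow> B0 \<le> B \<longrightarrow> B \<le> N \<longrightarrow>
     (\<exists>G. wf_network G \<and> net_size G = N
        \<and> (\<exists>s. valid_static G B s)
        \<and> (\<exists>k. dtr_cost G B h k)
        \<and> (\<forall>k. dtr_cost G B h k \<longrightarrow>
              real k \<ge> c * (real N / real B) * real (opt_static G B)))"
proof (intro exI[of _ "1/100 :: real"] conjI exI[of _ "3 :: nat"] allI impI)
  show "(0::real) < 1/100" by simp
next
  fix h :: heuristic and N B :: nat
  assume "valid_heuristic h" "3 \<le> B" "B \<le> N"
  then show "\<exists>G. wf_network G \<and> net_size G = N
        \<and> (\<exists>s. valid_static G B s)
        \<and> (\<exists>k. dtr_cost G B h k)
        \<and> (\<forall>k. dtr_cost G B h k \<longrightarrow>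
              real k \<ge> (1/100) * (real N / real B) * real (opt_static G B))"
    by (rule main)
qed

end
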